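(* Let $K\ge1$ and $T\ge2$ be integers with $N=KT$ odd, let $\eta$ be an integer, and let $a_1,\dots,a_{T-1}$ be binary sequences of period $K$. Let $s=I(0_K,a_1,\dots,a_{T-1})$ and $s'=I(1_K,a_1,\dots,a_{T-1})$ (period $N$), and let $$u=I\big(s',\ L^{4^{-1}+\eta}(s')+1,\ L^{2^{-1}}(s)+1,\ L^{3\cdot 4^{-1}+\eta}(s)+1\big),$$ a binary sequence of period $4N$. For $0\le\mu<4N$ write $\mu=4\mu_1+\mu_2$ with $\mu_2\in\{0,1,2,3\}$, $0\le\mu_1<N$, and set $\tau_2=\langle\mu_1\rangle_T$, $\tau_1^{\pm}=\langle 4^{-1}\pm\eta+\mu_1\rangle_T$, $\tau_2^{\pm}=\langle 3\cdot4^{-1}\pm\eta+\mu_1\rangle_T$. (1) If $d(a_x)=c_1$ for all $x=1,\dots,T-1$ (a constant $c_1$), then $$R_u(\mu)=\begin{cases}4KT&\text{if }\mu=0,\\ 4R_s(\mu_1)&\text{if }\mu_2=0,\ \tau_2=0,\ \mu\ne0,\\ 4R_s(\mu_1)+8c_1&\text{if }\mu_2=0,\ \tau_2\ne0,\\ 0&\text{if }\mu_2=1,\ \tau_1^+=0,\\ -4c_1&\text{if }\mu_2=1,\ \tau_1^+\ne0,\\ 0&\text{if }\mu_2=2,\\ 0&\text{if }\mu_2=3,\ \tau_2^-=0,\\ -4c_1&\text{if }\mu_2=3,\ \tau_2^-\ne0.\end{cases}$$ (2) If $d(a_x)+d(a_{T-x})=0$ for all $x=1,\dots,T-1$, then $$R_u(\mu)=\begin{cases}4KT&\text{if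 }\mu=0,\\ 4R_s(\mu_1)&\text{if }\mu_2=0,\ \mu\ne0,\\ 0&\text{if }\mu_2=1,\ \tau_1^-=0,\\ 4d(a_{\tau_1^-})&\text{if }\mu_2=1,\ \tau_1^-\ne0,\\ 0&\text{if }\mu_2=2,\\ 0&\text{if }\mu_2=3,\ \tau_2^+=0,\\ -4d(a_{\tau_2^+})&\text{if }\mu_2=3,\ \tau_2^+\ne0.\end{cases}$$
   Context: A binary sequence of period $n$ is a map $\mathbb{Z}\to\{0,1\}$ with period $n$ (indices mod $n$). For binary sequences $a,b$ of period $n$, $R_{a,b}(\tau)=\sum_{t=0}^{n-1}(-1)^{a(t)+b(t+\tau)}$ and $R_a=R_{a,a}$. For binary sequences $b_0,\dots,b_{m-1}$ of common period $n$, $I(b_0,\dots,b_{m-1})$ is the binary sequence $v$ of period $nm$ with $v(im+j)=b_j(i)$ for $0\le i\le n-1$, $0\le j\le m-1$. $0_K$, $1_K$ are the all-zero and all-one sequences of period $K$. For a binary sequence $a$ of period $K$, $d(a)=2|\{0\le t\le K-1:a(t)=1\}|-K$. For a sequence $v$ of period $N$ and an integer $m$, $L^m(v)$ is the left shift $L^m(v)(t)=v(t+m)$, and $v+1$ is the complement $t\mapsto v(t)+1 \bmod 2$. Since $N$ is odd, $4^{-1}$ and $2^{-1}$ denote integers with $4\cdot4^{-1}\equiv1$ and $2\cdot2^{-1}\equiv1 \pmod N$ (shifts depend only on their class mod $N$). For an integer $m$, $\langle m\rangle_T\in\{0,\dots,T-1\}$ denotes the residue of $m$ modulo $T$ (well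 defined on classes mod $N$ since $T\mid N$). *)

theory Defs
  imports Main
begin

text \<open>Binary sequences are modelled as maps int => bool (True = 1, False = 0);
 periodicity is stated explicitly where needed.\<close>

definition corr :: "nat \<Rightarrow> (int \<Rightarrow> bool) \<Rightarrow> (int \<Rightarrow> bool) \<Rightarrow> int \<Rightarrow> int" where
  "corr n a b \<tau> = (\<Sum>t\<in>{0..<int n}. (if a t = b (t + \<tau>) then 1 else -1))"

abbreviation acorr :: "nat \<Rightarrow> (int \<Rightarrow> bool) \<Rightarrow> int \<Rightarrow> int" where
  "acorr n a \<equiv> corr n a a"

text \<open>Interleaving I(b_0,...,b_{m-1}) of sequences of common period n, where m = length bs:
 v(i m + j) = b_j(i) for 0 <= i < n, 0 <= j < m, extended with period n m.\<close>
definition interleave :: "nat \<Rightarrow> (int \<Rightarrow> bool) list \<Rightarrow> int \<Rightarrow> bool" where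
  "interleave n bs t = (let m = int (length bs); r = t mod (int n * m)
                        in (bs ! nat (r mod m)) (r div m))"

definition zero_seq :: "int \<Rightarrow> bool" where "zero_seq t = False"
definition one_seq :: "int \<Rightarrow> bool" where "one_seq t = True"

definition dbal :: "nat \<Rightarrow> (int \<Rightarrow> bool) \<Rightarrow> int" where
  "dbal K a = 2 * int (card {t\<in>{0..<int K}. a t}) - int K"

definition lshift :: "int \<Rightarrow> (int \<Rightarrow> bool) \<Rightarrow> int \<Rightarrow> bool" where
  "lshift m v t = v (t + m)"

definition compl_seq :: "(int \<Rightarrow> bool) \<Rightarrow> int \<Rightarrow> bool" where
  "compl_seq v t = (\<not> v t)"

end

theory Submission
  imports Defs
begin

definition sg :: "bool \<Rightarrow> int" where "sg b = (if b then -1 else 1)"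

lemma sg_sq[simp]: "sg b * sg b = 1" by (simp add: sg_def)
lemma sg_not[simp]: "sg (\<not> b) = - sg b" by (simp add: sg_def)

lemma corr_sg: "corr n a b \<tau> = (\<Sum>t\<in>{0..<int n}. sg (a t) * sg (b (t + \<tau>)))"
  unfolding corr_def by (rule sum.cong) (auto simp: sg_def)

lemma per_mult:
  fixes f :: "int \<Rightarrow> 'b" and n :: int
  assumes "\<And>t. f (t + n) = f t"
  shows "f (t + k * n) = f t"
proof (induction k rule: int_induct[where k=0])
  case base then show ?case by simp
next
  case (step1 i) 
  have "f (t + (i+1)*n) = f ((t + i*n) + n)" by (simp add: algebra_simps)
  then show ?case using step1 assms by simp
next
  case (step2 i)
  have "f (t + i*n) = f ((t + (i-1)*n) + n)" by (simp add: algebra_simps)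
  then show ?case using step2 assms by simp
qed

lemma per_mod:
  fixes f :: "int \<Rightarrow> 'b" and n :: int
  assumes "\<And>t. f (t + n) = f t"
  shows "f t = f (t mod n)"
proof -
  have "f (t mod n + (t div n) * n) = f (t mod n)" by (rule per_mult[of f n, OF assms])
  then show ?thesis by (metis mod_div_mult_eq)
qed

lemma per_cong:
  fixes f :: "int \<Rightarrow> 'b" and n :: int
  assumes "\<And>t. f (t + n) = f t" and "n dvd (x - y)"
  shows "f x = f y"
proof -
  obtain k where "x - y = n * k" using assms(2) by blast
  then have "x = y + k * n" by (simp add: algebra_simps)
  then show ?thesis using per_mult[of f n, OF assms(1)] by simp
qed

lemma sum_shift:
  fixes f :: "int \<Rightarrow> int" and n :: int
  assumes "\<And>t. f (t + n) = f t" and "n > 0"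
  shows "(\<Sum>t\<in>{0..<n}. f (t + c)) = (\<Sum>t\<in>{0..<n}. f t)"
proof -
  have "(\<Sum>t\<in>{0..<n}. f (t + c)) = (\<Sum>t\<in>{0..<n}. f ((t + c) mod n))"
    using per_mod[of f n, OF assms(1)] by simp
  also have "\<dots> = (\<Sum>t\<in>{0..<n}. f t)"
  proof (rule sum.reindex_bij_betw)
    show "bij_betw (\<lambda>t. (t + c) mod n) {0..<n} {0..<n}"
    proof (rule bij_betw_byWitness[where f'="\<lambda>t. (t - c) mod n"])
      show "\<forall>a\<in>{0..<n}. ((a + c) mod n - c) mod n = a"
        by (auto simp: mod_simps)
      show "\<forall>a\<in>{0..<n}. ((a - c) mod n + c) mod n = a"
        by (auto simp: mod_simps)
      show "(\<lambda>t. (t + c) mod n) ` {0..<n} \<subseteq> {0..<n}" using assms(2) by auto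
      show "(\<lambda>t. (t - c) mod n) ` {0..<n} \<subseteq> {0..<n}" using assms(2) by auto
    qed
  qed
  finally show ?thesis .
qed

lemma sum_decomp:
  fixes g :: "int \<Rightarrow> int" and n m :: int
  assumes "m > 0" "n \<ge> 0"
  shows "(\<Sum>t\<in>{0..<n * m}. g t) = (\<Sum>i\<in>{0..<n}. \<Sum>j\<in>{0..<m}. g (i * m + j))"
proof -
  have "(\<Sum>i\<in>{0..<n}. \<Sum>j\<in>{0..<m}. g (i * m + j)) = (\<Sum>p\<in>{0..<n} \<times> {0..<m}. g (fst p * m + snd p))"
    by (simp add: sum.cartesian_product split_def)
  also have "\<dots> = (\<Sum>t\<in>{0..<n * m}. g t)"
  proof (rule sum.reindex_bij_betw)
    show "bij_betw (\<lambda>p. fst p * m + snd p) ({0..<n} \<times> {0..<m}) {0..<n * m}"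
    proof (rule bij_betw_byWitness[where f'="\<lambda>t. (t div m, t mod m)"])
      show "\<forall>a\<in>{0..<n} \<times> {0..<m}. (\<lambda>t. (t div m, t mod m)) ((\<lambda>p. fst p * m + snd p) a) = a"
        using assms by auto
      show "\<forall>a\<in>{0..<n * m}. (\<lambda>p. fst p * m + snd p) ((\<lambda>t. (t div m, t mod m)) a) = a"
        by simp
      show "(\<lambda>p. fst p * m + snd p) ` ({0..<n} \<times> {0..<m}) \<subseteq> {0..<n * m}"
      proof -
        have k: "0 \<le> i * m + j \<and> i * m + j < n * m" if h: "0 \<le> i" "i < n" "0 \<le> j" "j < m" for i j
        proof -
          have "(i + 1) * m \<le> n * m" using h assms by (intro mult_right_mono) auto
          then show ?thesis using h assms by (auto simp: algebra_simps)
        qed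
        show ?thesis using k by force
      qed
      show "(\<lambda>t. (t div m, t mod m)) ` {0..<n * m} \<subseteq> {0..<n} \<times> {0..<m}"
      proof -
        have k: "0 \<le> t div m \<and> t div m < n \<and> 0 \<le> t mod m \<and> t mod m < m" if h: "0 \<le> t" "t < n * m" for t
          using h assms by (auto simp: pos_imp_zdiv_nonneg_iff)
            (smt (verit, best) minus_mod_eq_div_mult mult_right_less_imp_less pos_mod_sign)
        show ?thesis using k by force
      qed
    qed
  qed
  finally show ?thesis by simp
qed

lemma interleave_at:
  assumes "n > 0" "bs \<noteq> []"
    and per: "\<And>j t. j < length bs \<Longrightarrow> (bs ! j) (t + int n) = (bs ! j) t"
  shows "interleave n bs t = (bs ! nat (t mod int (length bs))) (t div int (length bs))"
proof -
  define m where "m = int (length bs)"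
  have m0: "m > 0" using assms(2) by (simp add: m_def)
  have r: "t mod (int n * m) = m * (t div m mod int n) + t mod m"
    using zmod_zmult2_eq[of "int n" t m] by (simp add: mult.commute)
  have r1: "t mod (int n * m) mod m = t mod m" using r m0 by (simp add: mod_mod_cancel)
  have r2: "t mod (int n * m) div m = t div m mod int n" using r m0 by simp
  have j: "nat (t mod m) < length bs" using m0 by (simp add: m_def nat_less_iff)
  have "(bs ! nat (t mod m)) (t div m mod int n) = (bs ! nat (t mod m)) (t div m)"
    using per_mod[of "bs ! nat (t mod m)" "int n", OF per[OF j]] by simp
  then show ?thesis unfolding interleave_def Let_def using r1 r2 by (simp add: m_def)
qed

lemma interleave_per: "interleave n bs (t + int n * int (length bs)) = interleave n bs t"
  unfolding interleave_def Let_def by simp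

lemma nth_list_a: "1 \<le> j \<Longrightarrow> j < T \<Longrightarrow> (x # map a [1..<T]) ! j = a j"
  by (cases j) auto

locale thm3 =
  fixes K T :: nat and \<eta> inv4 inv2 :: int and a :: "nat \<Rightarrow> int \<Rightarrow> bool"
    and s s' u :: "int \<Rightarrow> bool"
  assumes K1: "K \<ge> 1" and T2: "T \<ge> 2" and oddN: "odd (K * T)"
    and aper: "\<forall>x\<in>{1..<T}. \<forall>t. a x (t + int K) = a x t"
    and i4: "(4 * inv4) mod int (K * T) = 1 mod int (K * T)"
    and i2: "(2 * inv2) mod int (K * T) = 1 mod int (K * T)"
    and sdef: "s = interleave K (zero_seq # map a [1..<T])"
    and s'def: "s' = interleave K (one_seq # map a [1..<T])"
    and udef: "u = interleave (K * T)
               [s', compl_seq (lshift (inv4 + \<eta>) s'), compl_seq (lshift inv2 s),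
                compl_seq (lshift (3 * inv4 + \<eta>) s)]"
begin

abbreviation "N \<equiv> int K * int T"

lemma N_pos: "N > 0" using K1 T2 by simp

lemma s_at: "s t = (if t mod int T = 0 then False else a (nat (t mod int T)) (t div int T))"
proof -
  have "s t = ((zero_seq # map a [1..<T]) ! nat (t mod int T)) (t div int T)"
    unfolding sdef
  proof (rule trans[OF interleave_at], goal_cases)
    case 1 then show ?case using K1 by simp
  next
    case 2 then show ?case by simp
  next
    case (3 j t)
    then show ?case using aper by (cases j) (auto simp: zero_seq_def)
  next
    case 4 then show ?case using T2 by simp
  qed
  also have "\<dots> = (if t mod int T = 0 then False else a (nat (t mod int T)) (t div int T))"
  proof (cases "t mod int T = 0")
    case True then show ?thesis by (simp add: zero_seq_def)
  next
    case False
    have "0 \<le> t mod int T" "t mod int T < int T" using T2 by auto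
    then have "0 < t mod int T" "t mod int T < int T" using False by auto
    then have "1 \<le> nat (t mod int T)" "nat (t mod int T) < T" by auto
    then show ?thesis using False nth_list_a by simp
  qed
  finally show ?thesis .
qed

lemma s'_at: "s' t = (if t mod int T = 0 then True else a (nat (t mod int T)) (t div int T))"
proof -
  have "s' t = ((one_seq # map a [1..<T]) ! nat (t mod int T)) (t div int T)"
    unfolding s'def
  proof (rule trans[OF interleave_at], goal_cases)
    case 1 then show ?case using K1 by simp
  next
    case 2 then show ?case by simp
  next
    case (3 j t)
    then show ?case using aper by (cases j) (auto simp: one_seq_def)
  next
    case 4 then show ?case using T2 by simp
  qed
  also have "\<dots> = (if t mod int T = 0 then True else a (nat (t mod int T)) (t div int T))"
  proof (cases "t mod int T = 0")
    case True then show ?thesis by (simp add: one_seq_def)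
  next
    case False
    have "0 \<le> t mod int T" "t mod int T < int T" using T2 by auto
    then have "0 < t mod int T" "t mod int T < int T" using False by auto
    then have "1 \<le> nat (t mod int T)" "nat (t mod int T) < T" by auto
    then show ?thesis using False nth_list_a by simp
  qed
  finally show ?thesis .
qed

lemma s_per: "s (t + N) = s t"
  using interleave_per[of K "zero_seq # map a [1..<T]" t] T2 by (simp add: sdef)

lemma s'_per: "s' (t + N) = s' t"
  using interleave_per[of K "one_seq # map a [1..<T]" t] T2 by (simp add: s'def)

definition ee :: "int \<Rightarrow> int" where "ee t = (if t mod int T = 0 then 1 else 0)"

lemma ee_per: "ee (t + N) = ee t"
  unfolding ee_def by (simp add: mult.commute)

lemma sg_s': "sg (s' t) = sg (s t) - 2 * ee t"
  unfolding s_at s'_at ee_def sg_def by simp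

definition Cf :: "(int \<Rightarrow> bool) \<Rightarrow> (int \<Rightarrow> bool) \<Rightarrow> int \<Rightarrow> int" where
  "Cf x y \<tau> = (\<Sum>i\<in>{0..<N}. sg (x i) * sg (y (i + \<tau>)))"

lemma Cf_shift:
  assumes "\<And>t. x (t + N) = x t" "\<And>t. y (t + N) = y t"
  shows "(\<Sum>i\<in>{0..<N}. c * (sg (x (i + p)) * sg (y (i + q)))) = c * Cf x y (q - p)"
proof -
  have "(\<Sum>i\<in>{0..<N}. sg (x (i + p)) * sg (y (i + q))) = (\<Sum>i\<in>{0..<N}. (\<lambda>i. sg (x i) * sg (y (i + (q - p)))) (i + p))"
    by simp
  also have "\<dots> = (\<Sum>i\<in>{0..<N}. sg (x i) * sg (y (i + (q - p))))"
  proof (rule sum_shift[OF _ N_pos])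
    fix t
    have "y (t + N + (q - p)) = y (t + (q - p))" using assms(2)[of "t + (q - p)"] by (simp add: algebra_simps)
    then show "sg (x (t + N)) * sg (y (t + N + (q - p))) = sg (x t) * sg (y (t + (q - p)))"
      using assms(1) by simp
  qed
  finally show ?thesis by (simp add: Cf_def sum_distrib_left[symmetric])
qed

lemma dvd_i2: "N dvd (inv2 - 2 * inv4)"
proof -
  have a: "N dvd (4 * inv4 - 1)" "N dvd (2 * inv2 - 1)"
    using i4 i2 by (simp_all add: mod_eq_dvd_iff)
  have "N dvd (2 * inv2 - 1) - (4 * inv4 - 1)" using dvd_diff[OF a(2) a(1)] .
  moreover have "(2 * inv2 - 1) - (4 * inv4 - 1) = 2 * (inv2 - 2 * inv4)" by simp
  ultimately have "N dvd 2 * (inv2 - 2 * inv4)" by simp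
  moreover have "odd (int (K * T))" using oddN by simp
  then have "coprime N 2" by simp
  ultimately show ?thesis using coprime_dvd_mult_right_iff by blast
qed

lemma dvd_i4: "N dvd (4 * inv4 - 1)"
  using i4 by (simp add: mod_eq_dvd_iff)

lemma Cf_cong:
  assumes "\<And>t. y (t + N) = y t" "\<tau> - \<tau>' = ka * (inv2 - 2 * inv4) + kb * (4 * inv4 - 1)"
  shows "Cf x y \<tau> = Cf x y \<tau>'"
proof -
  have d: "N dvd (i + \<tau>) - (i + \<tau>')" for i
    using assms(2) dvd_i2 dvd_i4 by simp
  show ?thesis unfolding Cf_def
    by (rule sum.cong) (use per_cong[of y N, OF assms(1) d] in auto)
qed


definition D :: "int \<Rightarrow> int" where "D \<tau> = (\<Sum>i\<in>{0..<N}. ee i * sg (s (i + \<tau>)))"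
definition E :: "int \<Rightarrow> int" where "E \<tau> = (\<Sum>i\<in>{0..<N}. ee i * ee (i + \<tau>))"

lemma sum_sgs_ee: "(\<Sum>i\<in>{0..<N}. sg (s i) * ee (i + \<tau>)) = D (- \<tau>)"
proof -
  have "(\<Sum>i\<in>{0..<N}. sg (s i) * ee (i + \<tau>)) = (\<Sum>i\<in>{0..<N}. (\<lambda>j. ee j * sg (s (j - \<tau>))) (i + \<tau>))"
    by (simp add: mult.commute)
  also have "\<dots> = (\<Sum>i\<in>{0..<N}. ee i * sg (s (i - \<tau>)))"
  proof (rule sum_shift[OF _ N_pos])
    fix t
    have "s (t + N - \<tau>) = s (t - \<tau>)" using s_per[of "t - \<tau>"] by (simp add: algebra_simps)
    then show "ee (t + N) * sg (s (t + N - \<tau>)) = ee t * sg (s (t - \<tau>))" using ee_per by simp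
  qed
  finally show ?thesis by (simp add: D_def)
qed

lemma Cf_s's: "Cf s' s \<tau> = Cf s s \<tau> - 2 * D \<tau>"
  unfolding Cf_def D_def sg_s'
  by (simp add: left_diff_distrib sum_subtractf sum_distrib_left mult.assoc)

lemma Cf_ss': "Cf s s' \<tau> = Cf s s \<tau> - 2 * D (- \<tau>)"
proof -
  have "Cf s s' \<tau> = Cf s s \<tau> - 2 * (\<Sum>i\<in>{0..<N}. sg (s i) * ee (i + \<tau>))"
    unfolding Cf_def sg_s'
    by (simp add: right_diff_distrib sum_subtractf sum_distrib_left mult.assoc mult.left_commute)
  then show ?thesis using sum_sgs_ee by simp
qed

lemma Cf_s's': "Cf s' s' \<tau> = Cf s s \<tau> - 2 * D \<tau> - 2 * D (- \<tau>) + 4 * E \<tau>"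
proof -
  have "Cf s' s' \<tau> = Cf s s \<tau> - 2 * D \<tau> - 2 * (\<Sum>i\<in>{0..<N}. sg (s i) * ee (i + \<tau>)) + 4 * E \<tau>"
    unfolding Cf_def D_def E_def sg_s'
    by (simp add: algebra_simps sum_subtractf sum.distrib sum_distrib_left)
  then show ?thesis using sum_sgs_ee by simp
qed


lemma dbal_sum: "(\<Sum>i\<in>{0..<int K}. sg (a x i)) = - dbal K (a x)"
proof -
  have "(\<Sum>i\<in>{0..<int K}. sg (a x i)) = (\<Sum>i\<in>{0..<int K}. 1 - 2 * of_bool (a x i))"
    by (rule sum.cong) (auto simp: sg_def)
  also have "\<dots> = int K - 2 * int (card ({0..<int K} \<inter> {i. a x i}))"
    by (simp add: sum_subtractf sum_distrib_left[symmetric])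
  also have "{0..<int K} \<inter> {i. a x i} = {t\<in>{0..<int K}. a x t}" by auto
  finally show ?thesis by (simp add: dbal_def)
qed

lemma mod_row: "(i * int T + j) mod int T = j mod int T"
  by (rule mod_mult_self3)

lemma sum_row: "(\<Sum>i\<in>{0..<int K}. sg (s (i * int T + \<tau>))) =
   (if \<tau> mod int T = 0 then int K else - dbal K (a (nat (\<tau> mod int T))))"
proof -
  have m: "(i * int T + \<tau>) mod int T = \<tau> mod int T" for i by (rule mod_row)
  have d: "(i * int T + \<tau>) div int T = i + \<tau> div int T" for i using T2 by simp
  show ?thesis
  proof (cases "\<tau> mod int T = 0")
    case True
    then show ?thesis by (simp add: s_at m sg_def)
  next
    case False
    define r where "r = nat (\<tau> mod int T)"
    have "0 \<le> \<tau> mod int T" "\<tau> mod int T < int T" using T2 by auto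
    then have r: "r \<in> {1..<T}" using False by (auto simp: r_def)
    have "(\<Sum>i\<in>{0..<int K}. sg (s (i * int T + \<tau>))) = (\<Sum>i\<in>{0..<int K}. sg (a r (i + \<tau> div int T)))"
      by (rule sum.cong) (simp_all add: s_at m d False r_def)
    also have "\<dots> = (\<Sum>i\<in>{0..<int K}. sg (a r i))"
    proof (rule sum_shift[where f="\<lambda>i. sg (a r i)"])
      fix t show "sg (a r (t + int K)) = sg (a r t)" using aper r by simp
    next
      show "0 < int K" using K1 by simp
    qed
    also have "\<dots> = - dbal K (a r)" by (rule dbal_sum)
    finally have "(\<Sum>i\<in>{0..<int K}. sg (s (i * int T + \<tau>))) = - dbal K (a (nat (\<tau> mod int T)))"
      unfolding r_def .
    then show ?thesis by (simp only: if_not_P[OF False])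
  qed
qed

lemma ee_row: "j \<in> {0..<int T} \<Longrightarrow> ee (i * int T + j) = (if j = 0 then 1 else 0)"
  unfolding ee_def mod_row by simp

lemma D_val: "D \<tau> = (if \<tau> mod int T = 0 then int K else - dbal K (a (nat (\<tau> mod int T))))"
proof -
  have "D \<tau> = (\<Sum>i\<in>{0..<int K}. \<Sum>j\<in>{0..<int T}. ee (i * int T + j) * sg (s (i * int T + j + \<tau>)))"
    unfolding D_def by (rule sum_decomp) (use T2 in auto)
  also have "\<dots> = (\<Sum>i\<in>{0..<int K}. sg (s (i * int T + \<tau>)))"
  proof (rule sum.cong[OF refl])
    fix i
    have "(\<Sum>j\<in>{0..<int T}. ee (i * int T + j) * sg (s (i * int T + j + \<tau>))) =
          (\<Sum>j\<in>{0..<int T}. if j = 0 then sg (s (i * int T + j + \<tau>)) else 0)"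
      by (rule sum.cong) (simp_all add: ee_row)
    also have "\<dots> = sg (s (i * int T + \<tau>))" using T2 by (simp add: sum.delta)
    finally show "(\<Sum>j\<in>{0..<int T}. ee (i * int T + j) * sg (s (i * int T + j + \<tau>))) = sg (s (i * int T + \<tau>))" .
  qed
  finally show ?thesis using sum_row[of \<tau>] by (rule trans)
qed

lemma E_val: "E \<tau> = (if \<tau> mod int T = 0 then int K else 0)"
proof -
  have "E \<tau> = (\<Sum>i\<in>{0..<int K}. \<Sum>j\<in>{0..<int T}. ee (i * int T + j) * ee (i * int T + j + \<tau>))"
    unfolding E_def by (rule sum_decomp) (use T2 in auto)
  also have "\<dots> = (\<Sum>i\<in>{0..<int K}. ee (i * int T + \<tau>))"
  proof (rule sum.cong[OF refl])
    fix i
    have "(\<Sum>j\<in>{0..<int T}. ee (i * int T + j) * ee (i * int T + j + \<tau>)) =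
          (\<Sum>j\<in>{0..<int T}. if j = 0 then ee (i * int T + j + \<tau>) else 0)"
      by (rule sum.cong) (simp_all add: ee_row)
    also have "\<dots> = ee (i * int T + \<tau>)" using T2 by (simp add: sum.delta)
    finally show "(\<Sum>j\<in>{0..<int T}. ee (i * int T + j) * ee (i * int T + j + \<tau>)) = ee (i * int T + \<tau>)" .
  qed
  also have "\<dots> = (\<Sum>i\<in>{0..<int K}. ee \<tau>)"
    unfolding ee_def mod_row ..
  also have "\<dots> = int K * ee \<tau>" unfolding sum_constant card_atLeastLessThan_int by simp
  finally have "E \<tau> = int K * ee \<tau>" .
  then show ?thesis by (cases "\<tau> mod int T = 0") (simp_all add: ee_def)
qed


abbreviation "clist \<equiv> [s', compl_seq (lshift (inv4 + \<eta>) s'), compl_seq (lshift inv2 s),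
                compl_seq (lshift (3 * inv4 + \<eta>) s)]"

lemma u_at: "u t = (clist ! nat (t mod 4)) (t div 4)"
  unfolding udef
proof (rule trans[OF interleave_at], goal_cases)
  case 1 then show ?case using K1 T2 by simp
next
  case 2 then show ?case by simp
next
  case (3 j t)
  have p: "s (t + int (K * T)) = s t" "s' (t + int (K * T)) = s' t" for t
    using s_per s'_per by simp_all
  have p2: "s (t + int (K * T) + c) = s (t + c)" "s' (t + int (K * T) + c) = s' (t + c)" for t c
    using p[of "t + c"] by (simp_all add: algebra_simps)
  from 3 have "j = 0 \<or> j = 1 \<or> j = 2 \<or> j = 3" by auto
  then show ?case using p p2 by (auto simp: compl_seq_def lshift_def)
next
  case 4 then show ?case by simp
qed

lemma u4: "u (x * 4 + k) = (clist ! nat (k mod 4)) (x + k div 4)"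
  unfolding u_at by simp

lemma four: "{0..<4::int} = {0, 1, 2, 3}" by auto

lemma Ru_expand: "acorr (4 * (K * T)) u (\<mu>1 * 4 + k) =
  (\<Sum>i\<in>{0..<N}. \<Sum>j\<in>{0, 1, 2, 3}. sg ((clist ! nat j) i) *
       sg ((clist ! nat ((j + k) mod 4)) (i + \<mu>1 + (j + k) div 4)))"
proof -
  have "acorr (4 * (K * T)) u (\<mu>1 * 4 + k) = (\<Sum>t\<in>{0..<N * 4}. sg (u t) * sg (u (t + (\<mu>1 * 4 + k))))"
    unfolding corr_sg by (simp add: mult.commute mult.left_commute)
  also have "\<dots> = (\<Sum>i\<in>{0..<N}. \<Sum>j\<in>{0..<4}. sg (u (i * 4 + j)) * sg (u (i * 4 + j + (\<mu>1 * 4 + k))))"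
    by (rule sum_decomp) (use N_pos in auto)
  also have "\<dots> = (\<Sum>i\<in>{0..<N}. \<Sum>j\<in>{0, 1, 2, 3}. sg ((clist ! nat j) i) *
       sg ((clist ! nat ((j + k) mod 4)) (i + \<mu>1 + (j + k) div 4)))"
  proof (rule sum.cong[OF refl], unfold four, rule sum.cong[OF refl])
    fix i j :: int assume "j \<in> {0, 1, 2, 3}"
    have a: "u (i * 4 + j) = (clist ! nat j) i"
      using u4[of i j] \<open>j \<in> {0, 1, 2, 3}\<close> by auto
    have b: "u (i * 4 + j + (\<mu>1 * 4 + k)) = (clist ! nat ((j + k) mod 4)) (i + \<mu>1 + (j + k) div 4)"
      using u4[of "i + \<mu>1" "j + k"] by (simp add: algebra_simps)
    show "sg (u (i * 4 + j)) * sg (u (i * 4 + j + (\<mu>1 * 4 + k))) = sg ((clist ! nat j) i) *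
       sg ((clist ! nat ((j + k) mod 4)) (i + \<mu>1 + (j + k) div 4))"
      using a b by simp
  qed
  finally show ?thesis .
qed


lemmas Cfs = Cf_shift[of s' s', OF s'_per s'_per] Cf_shift[of s' s, OF s'_per s_per] Cf_shift[of s s, OF s_per s_per] Cf_shift[of s s', OF s_per s'_per]

lemma Ru1: "acorr (4 * (K * T)) u (\<mu>1 * 4 + 1) =
   2 * D (inv4 + \<eta> + \<mu>1) + 2 * D (- (inv4 + \<eta> + \<mu>1)) - 4 * E (inv4 + \<eta> + \<mu>1)
   - 2 * D (inv4 - \<eta> + \<mu>1) + 2 * D (- (inv4 - \<eta> + \<mu>1))"
proof -
  have "acorr (4 * (K * T)) u (\<mu>1 * 4 + 1) =
    (\<Sum>i\<in>{0..<N}. (-1) * (sg (s' (i + 0)) * sg (s' (i + (\<mu>1 + (inv4 + \<eta>)))))) +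
    (\<Sum>i\<in>{0..<N}. 1 * (sg (s' (i + (inv4 + \<eta>))) * sg (s (i + (\<mu>1 + inv2))))) +
    (\<Sum>i\<in>{0..<N}. 1 * (sg (s (i + inv2)) * sg (s (i + (\<mu>1 + (3 * inv4 + \<eta>)))))) +
    (\<Sum>i\<in>{0..<N}. (-1) * (sg (s (i + (3 * inv4 + \<eta>))) * sg (s' (i + (\<mu>1 + 1)))))"
    unfolding Ru_expand sum.distrib[symmetric]
    by (rule sum.cong) (simp_all add: compl_seq_def lshift_def algebra_simps)
  also have "\<dots> = (-1) * Cf s' s' ((\<mu>1 + (inv4 + \<eta>)) - 0) + 1 * Cf s' s ((\<mu>1 + inv2) - (inv4 + \<eta>))
     + 1 * Cf s s ((\<mu>1 + (3 * inv4 + \<eta>)) - inv2) + (-1) * Cf s s' ((\<mu>1 + 1) - (3 * inv4 + \<eta>))"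
    by (simp only: Cfs)
  also have "Cf s' s ((\<mu>1 + inv2) - (inv4 + \<eta>)) = Cf s' s (inv4 - \<eta> + \<mu>1)"
    by (rule Cf_cong[where ka=1 and kb=0]) (simp_all add: s_per algebra_simps)
  also have "Cf s s ((\<mu>1 + (3 * inv4 + \<eta>)) - inv2) = Cf s s (inv4 + \<eta> + \<mu>1)"
    by (rule Cf_cong[where ka="-1" and kb=0]) (simp_all add: s_per algebra_simps)
  also have "Cf s s' ((\<mu>1 + 1) - (3 * inv4 + \<eta>)) = Cf s s' (inv4 - \<eta> + \<mu>1)"
    by (rule Cf_cong[where ka=0 and kb="-1"]) (simp_all add: s'_per algebra_simps)
  finally show ?thesis unfolding Cf_s's Cf_ss' Cf_s's' by (simp add: algebra_simps)
qed


lemma Ru0: "acorr (4 * (K * T)) u (\<mu>1 * 4 + 0) =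
   4 * Cf s s \<mu>1 - 4 * D \<mu>1 - 4 * D (- \<mu>1) + 8 * E \<mu>1"
proof -
  have "acorr (4 * (K * T)) u (\<mu>1 * 4 + 0) =
    (\<Sum>i\<in>{0..<N}. 1 * (sg (s' (i + 0)) * sg (s' (i + (\<mu>1 + 0))))) +
    (\<Sum>i\<in>{0..<N}. 1 * (sg (s' (i + (inv4 + \<eta>))) * sg (s' (i + (\<mu>1 + (inv4 + \<eta>)))))) +
    (\<Sum>i\<in>{0..<N}. 1 * (sg (s (i + inv2)) * sg (s (i + (\<mu>1 + inv2))))) +
    (\<Sum>i\<in>{0..<N}. 1 * (sg (s (i + (3 * inv4 + \<eta>))) * sg (s (i + (\<mu>1 + (3 * inv4 + \<eta>))))))"
    unfolding Ru_expand sum.distrib[symmetric]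
    by (rule sum.cong) (simp_all add: compl_seq_def lshift_def algebra_simps)
  also have "\<dots> = 1 * Cf s' s' ((\<mu>1 + 0) - 0) + 1 * Cf s' s' ((\<mu>1 + (inv4 + \<eta>)) - (inv4 + \<eta>))
     + 1 * Cf s s ((\<mu>1 + inv2) - inv2) + 1 * Cf s s ((\<mu>1 + (3 * inv4 + \<eta>)) - (3 * inv4 + \<eta>))"
    by (simp only: Cfs)
  finally show ?thesis unfolding Cf_s's Cf_ss' Cf_s's' by (simp add: algebra_simps)
qed

lemma Ru2: "acorr (4 * (K * T)) u (\<mu>1 * 4 + 2) = 0"
proof -
  have "acorr (4 * (K * T)) u (\<mu>1 * 4 + 2) =
    (\<Sum>i\<in>{0..<N}. (-1) * (sg (s' (i + 0)) * sg (s (i + (\<mu>1 + inv2))))) +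
    (\<Sum>i\<in>{0..<N}. 1 * (sg (s' (i + (inv4 + \<eta>))) * sg (s (i + (\<mu>1 + (3 * inv4 + \<eta>)))))) +
    (\<Sum>i\<in>{0..<N}. (-1) * (sg (s (i + inv2)) * sg (s' (i + (\<mu>1 + 1))))) +
    (\<Sum>i\<in>{0..<N}. 1 * (sg (s (i + (3 * inv4 + \<eta>))) * sg (s' (i + (\<mu>1 + 1 + (inv4 + \<eta>))))))"
    unfolding Ru_expand sum.distrib[symmetric]
    by (rule sum.cong) (simp_all add: compl_seq_def lshift_def algebra_simps)
  also have "\<dots> = (-1) * Cf s' s ((\<mu>1 + inv2) - 0) + 1 * Cf s' s ((\<mu>1 + (3 * inv4 + \<eta>)) - (inv4 + \<eta>))
     + (-1) * Cf s s' ((\<mu>1 + 1) - inv2) + 1 * Cf s s' ((\<mu>1 + 1 + (inv4 + \<eta>)) - (3 * inv4 + \<eta>))"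
    by (simp only: Cfs)
  also have "Cf s' s ((\<mu>1 + (3 * inv4 + \<eta>)) - (inv4 + \<eta>)) = Cf s' s ((\<mu>1 + inv2) - 0)"
    by (rule Cf_cong[where ka="-1" and kb=0]) (simp_all add: s_per algebra_simps)
  also have "Cf s s' ((\<mu>1 + 1) - inv2) = Cf s s' ((\<mu>1 + inv2) - 0)"
    by (rule Cf_cong[where ka="-2" and kb="-1"]) (simp_all add: s'_per algebra_simps)
  also have "Cf s s' ((\<mu>1 + 1 + (inv4 + \<eta>)) - (3 * inv4 + \<eta>)) = Cf s s' ((\<mu>1 + inv2) - 0)"
    by (rule Cf_cong[where ka="-1" and kb="-1"]) (simp_all add: s'_per algebra_simps)
  finally show ?thesis by simp
qed

lemma Ru3: "acorr (4 * (K * T)) u (\<mu>1 * 4 + 3) =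
   2 * D (3 * inv4 + \<eta> + \<mu>1) - 2 * D (- (3 * inv4 + \<eta> + \<mu>1))
   + 2 * D (3 * inv4 - \<eta> + \<mu>1) + 2 * D (- (3 * inv4 - \<eta> + \<mu>1)) - 4 * E (3 * inv4 - \<eta> + \<mu>1)"
proof -
  have "acorr (4 * (K * T)) u (\<mu>1 * 4 + 3) =
    (\<Sum>i\<in>{0..<N}. (-1) * (sg (s' (i + 0)) * sg (s (i + (\<mu>1 + (3 * inv4 + \<eta>)))))) +
    (\<Sum>i\<in>{0..<N}. (-1) * (sg (s' (i + (inv4 + \<eta>))) * sg (s' (i + (\<mu>1 + 1))))) +
    (\<Sum>i\<in>{0..<N}. 1 * (sg (s (i + inv2)) * sg (s' (i + (\<mu>1 + 1 + (inv4 + \<eta>)))))) +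
    (\<Sum>i\<in>{0..<N}. 1 * (sg (s (i + (3 * inv4 + \<eta>))) * sg (s (i + (\<mu>1 + 1 + inv2)))))"
    unfolding Ru_expand sum.distrib[symmetric]
    by (rule sum.cong) (simp_all add: compl_seq_def lshift_def algebra_simps)
  also have "\<dots> = (-1) * Cf s' s ((\<mu>1 + (3 * inv4 + \<eta>)) - 0) + (-1) * Cf s' s' ((\<mu>1 + 1) - (inv4 + \<eta>))
     + 1 * Cf s s' ((\<mu>1 + 1 + (inv4 + \<eta>)) - inv2) + 1 * Cf s s ((\<mu>1 + 1 + inv2) - (3 * inv4 + \<eta>))"
    by (simp only: Cfs)
  also have "Cf s' s ((\<mu>1 + (3 * inv4 + \<eta>)) - 0) = Cf s' s (3 * inv4 + \<eta> + \<mu>1)"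
    by (simp add: algebra_simps)
  also have "Cf s' s' ((\<mu>1 + 1) - (inv4 + \<eta>)) = Cf s' s' (3 * inv4 - \<eta> + \<mu>1)"
    by (rule Cf_cong[where ka=0 and kb="-1"]) (simp_all add: s'_per algebra_simps)
  also have "Cf s s' ((\<mu>1 + 1 + (inv4 + \<eta>)) - inv2) = Cf s s' (3 * inv4 + \<eta> + \<mu>1)"
    by (rule Cf_cong[where ka="-1" and kb="-1"]) (simp_all add: s'_per algebra_simps)
  also have "Cf s s ((\<mu>1 + 1 + inv2) - (3 * inv4 + \<eta>)) = Cf s s (3 * inv4 - \<eta> + \<mu>1)"
    by (rule Cf_cong[where ka=1 and kb="-1"]) (simp_all add: s_per algebra_simps)
  finally show ?thesis unfolding Cf_s's Cf_ss' Cf_s's' by (simp add: algebra_simps)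
qed


lemma r_range: "\<tau> mod int T \<noteq> 0 \<Longrightarrow> nat (\<tau> mod int T) \<in> {1..<T} \<and> T - nat (\<tau> mod int T) \<in> {1..<T}"
proof -
  assume h: "\<tau> mod int T \<noteq> 0"
  have "0 \<le> \<tau> mod int T" "\<tau> mod int T < int T" using T2 by auto
  then show ?thesis using h by auto
qed

lemma D_neg: "D (- \<tau>) = (if \<tau> mod int T = 0 then int K else - dbal K (a (T - nat (\<tau> mod int T))))"
proof (cases "\<tau> mod int T = 0")
  case True
  then show ?thesis unfolding D_val by (simp add: zmod_zminus1_eq_if)
next
  case False
  have "0 \<le> \<tau> mod int T" "\<tau> mod int T < int T" using T2 by auto
  then have "nat (int T - \<tau> mod int T) = T - nat (\<tau> mod int T)" "int T - \<tau> mod int T \<noteq> 0" by auto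
  moreover have "(int T - \<tau> mod int T) mod int T = int T - \<tau> mod int T"
    using \<open>0 \<le> \<tau> mod int T\<close> \<open>\<tau> mod int T < int T\<close> False by (intro mod_pos_pos_trivial) auto
  ultimately show ?thesis using False unfolding D_val by (simp add: zmod_zminus1_eq_if)
qed

lemma neg_mod0: "(- \<tau>) mod int T = 0 \<longleftrightarrow> \<tau> mod int T = 0"
proof -
  have "\<tau> mod int T < int T" using T2 by auto
  then show ?thesis by (auto simp: zmod_zminus1_eq_if)
qed

lemma R_corr: "Cf s s \<tau> = acorr (K * T) s \<tau>"
  unfolding Cf_def corr_sg by simp

lemma R0: "Cf s s 0 = int K * int T"
  unfolding Cf_def by simp

lemma mu_split:
  assumes "\<mu> \<in> {0..<4 * int (K * T)}"
  shows "\<mu> = (\<mu> div 4) * 4 + \<mu> mod 4" "\<mu> mod 4 \<in> {0, 1, 2, 3}"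
    "\<mu> = 0 \<longleftrightarrow> \<mu> div 4 = 0 \<and> \<mu> mod 4 = 0"
  by auto

lemma part1:
  assumes c: "\<forall>x\<in>{1..<T}. dbal K (a x) = c1" and mu: "\<mu> \<in> {0..<4 * int (K * T)}"
  shows "(let \<mu>1 = \<mu> div 4; \<mu>2 = \<mu> mod 4;
             \<tau>2 = \<mu>1 mod int T;
             \<tau>1p = (inv4 + \<eta> + \<mu>1) mod int T;
             \<tau>2m = (3 * inv4 - \<eta> + \<mu>1) mod int T
         in acorr (4 * (K * T)) u \<mu> =
            (if \<mu> = 0 then 4 * int K * int T
             else if \<mu>2 = 0 \<and> \<tau>2 = 0 then 4 * acorr (K * T) s \<mu>1
             else if \<mu>2 = 0 then 4 * acorr (K * T) s \<mu>1 + 8 * c1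
             else if \<mu>2 = 1 \<and> \<tau>1p = 0 then 0
             else if \<mu>2 = 1 then -4 * c1
             else if \<mu>2 = 2 then 0
             else if \<tau>2m = 0 then 0
             else -4 * c1))"
proof -
  have Dc: "D \<tau> = (if \<tau> mod int T = 0 then int K else - c1)" for \<tau>
    using c r_range[of \<tau>] unfolding D_val by auto
  have Dcn: "D (- \<tau>) = (if \<tau> mod int T = 0 then int K else - c1)" for \<tau>
    using c r_range[of \<tau>] unfolding D_neg by auto
  define m1 where "m1 = \<mu> div 4"
  define m2 where "m2 = \<mu> mod 4"
  have e: "\<mu> = m1 * 4 + m2" "m2 \<in> {0, 1, 2, 3}" "\<mu> = 0 \<longleftrightarrow> m1 = 0 \<and> m2 = 0"
    using mu_split[OF mu] unfolding m1_def m2_def by auto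
  show ?thesis unfolding Let_def m1_def[symmetric] m2_def[symmetric]
  proof -
    consider "m2 = 0" | "m2 = 1" | "m2 = 2" | "m2 = 3" using e(2) by auto
    then show "acorr (4 * (K * T)) u \<mu> =
            (if \<mu> = 0 then 4 * int K * int T
             else if m2 = 0 \<and> m1 mod int T = 0 then 4 * acorr (K * T) s m1
             else if m2 = 0 then 4 * acorr (K * T) s m1 + 8 * c1
             else if m2 = 1 \<and> (inv4 + \<eta> + m1) mod int T = 0 then 0
             else if m2 = 1 then -4 * c1
             else if m2 = 2 then 0
             else if (3 * inv4 - \<eta> + m1) mod int T = 0 then 0
             else -4 * c1)"
    proof cases
      case 1
      then show ?thesis using Ru0[of m1] e R0
        by (simp add: Dc neg_mod0 E_val R_corr[symmetric])
    next
      case 2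
      note R = Ru1[of m1, unfolded Dcn[of "inv4 + \<eta> + m1"] Dcn[of "inv4 - \<eta> + m1"]
          Dc[of "inv4 + \<eta> + m1"] Dc[of "inv4 - \<eta> + m1"] E_val]
      show ?thesis using R e 2 by simp
    next
      case 3
      then show ?thesis using Ru2[of m1] e by simp
    next
      case 4
      note R = Ru3[of m1, unfolded Dcn[of "3 * inv4 + \<eta> + m1"] Dcn[of "3 * inv4 - \<eta> + m1"]
          Dc[of "3 * inv4 + \<eta> + m1"] Dc[of "3 * inv4 - \<eta> + m1"] E_val]
      show ?thesis using R e 4 by simp
    qed
  qed
qed


lemma part2:
  assumes c: "\<forall>x\<in>{1..<T}. dbal K (a x) + dbal K (a (T - x)) = 0" and mu: "\<mu> \<in> {0..<4 * int (K * T)}"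
  shows "(let \<mu>1 = \<mu> div 4; \<mu>2 = \<mu> mod 4;
             \<tau>1m = (inv4 - \<eta> + \<mu>1) mod int T;
             \<tau>2p = (3 * inv4 + \<eta> + \<mu>1) mod int T
         in acorr (4 * (K * T)) u \<mu> =
            (if \<mu> = 0 then 4 * int K * int T
             else if \<mu>2 = 0 then 4 * acorr (K * T) s \<mu>1
             else if \<mu>2 = 1 \<and> \<tau>1m = 0 then 0
             else if \<mu>2 = 1 then 4 * dbal K (a (nat \<tau>1m))
             else if \<mu>2 = 2 then 0
             else if \<tau>2p = 0 then 0
             else -4 * dbal K (a (nat \<tau>2p))))"
proof -
  have Dcn: "D (- \<tau>) = (if \<tau> mod int T = 0 then int K else dbal K (a (nat (\<tau> mod int T))))" for \<tau>
  proof (cases "\<tau> mod int T = 0")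
    case True then show ?thesis unfolding D_neg by simp
  next
    case False
    then have "nat (\<tau> mod int T) \<in> {1..<T}" using r_range by blast
    then have "dbal K (a (T - nat (\<tau> mod int T))) = - dbal K (a (nat (\<tau> mod int T)))"
      using c by force
    then show ?thesis using False unfolding D_neg by simp
  qed
  note Dc = D_val
  define m1 where "m1 = \<mu> div 4"
  define m2 where "m2 = \<mu> mod 4"
  have e: "\<mu> = m1 * 4 + m2" "m2 \<in> {0, 1, 2, 3}" "\<mu> = 0 \<longleftrightarrow> m1 = 0 \<and> m2 = 0"
    using mu_split[OF mu] unfolding m1_def m2_def by auto
  show ?thesis unfolding Let_def m1_def[symmetric] m2_def[symmetric]
  proof -
    consider "m2 = 0" | "m2 = 1" | "m2 = 2" | "m2 = 3" using e(2) by auto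
    then show "acorr (4 * (K * T)) u \<mu> =
            (if \<mu> = 0 then 4 * int K * int T
             else if m2 = 0 then 4 * acorr (K * T) s m1
             else if m2 = 1 \<and> (inv4 - \<eta> + m1) mod int T = 0 then 0
             else if m2 = 1 then 4 * dbal K (a (nat ((inv4 - \<eta> + m1) mod int T)))
             else if m2 = 2 then 0
             else if (3 * inv4 + \<eta> + m1) mod int T = 0 then 0
             else -4 * dbal K (a (nat ((3 * inv4 + \<eta> + m1) mod int T))))"
    proof cases
      case 1
      note R = Ru0[of m1, unfolded Dcn[of m1] Dc[of m1] E_val]
      show ?thesis using R e 1 R0 by (simp add: R_corr[symmetric])
    next
      case 2
      note R = Ru1[of m1, unfolded Dcn[of "inv4 + \<eta> + m1"] Dcn[of "inv4 - \<eta> + m1"]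
          Dc[of "inv4 + \<eta> + m1"] Dc[of "inv4 - \<eta> + m1"] E_val]
      show ?thesis using R e 2 by simp
    next
      case 3
      then show ?thesis using Ru2[of m1] e by simp
    next
      case 4
      note R = Ru3[of m1, unfolded Dcn[of "3 * inv4 + \<eta> + m1"] Dcn[of "3 * inv4 - \<eta> + m1"]
          Dc[of "3 * inv4 + \<eta> + m1"] Dc[of "3 * inv4 - \<eta> + m1"] E_val]
      show ?thesis using R e 4 by simp
    qed
  qed
qed

end


theorem theorem3:
  fixes K T :: nat and \<eta> inv4 inv2 c1 :: int and a :: "nat \<Rightarrow> int \<Rightarrow> bool"
    and s s' u :: "int \<Rightarrow> bool"
  assumes "K \<ge> 1" and "T \<ge> 2" and "odd (K * T)"
    and "\<forall>x\<in>{1..<T}. \<forall>t. a x (t + int K) = a x t"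
    and "(4 * inv4) mod int (K * T) = 1 mod int (K * T)"
    and "(2 * inv2) mod int (K * T) = 1 mod int (K * T)"
    and "s = interleave K (zero_seq # map a [1..<T])"
    and "s' = interleave K (one_seq # map a [1..<T])"
    and "u = interleave (K * T)
               [s', compl_seq (lshift (inv4 + \<eta>) s'), compl_seq (lshift inv2 s),
                compl_seq (lshift (3 * inv4 + \<eta>) s)]"
  shows
   "((\<forall>x\<in>{1..<T}. dbal K (a x) = c1) \<longrightarrow>
      (\<forall>\<mu>\<in>{0..<4 * int (K * T)}.
        (let \<mu>1 = \<mu> div 4; \<mu>2 = \<mu> mod 4;
             \<tau>2 = \<mu>1 mod int T;
             \<tau>1p = (inv4 + \<eta> + \<mu>1) mod int T;
             \<tau>2m = (3 * inv4 - \<eta> + \<mu>1) mod int T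
         in acorr (4 * (K * T)) u \<mu> =
            (if \<mu> = 0 then 4 * int K * int T
             else if \<mu>2 = 0 \<and> \<tau>2 = 0 then 4 * acorr (K * T) s \<mu>1
             else if \<mu>2 = 0 then 4 * acorr (K * T) s \<mu>1 + 8 * c1
             else if \<mu>2 = 1 \<and> \<tau>1p = 0 then 0
             else if \<mu>2 = 1 then -4 * c1
             else if \<mu>2 = 2 then 0
             else if \<tau>2m = 0 then 0
             else -4 * c1))))
    \<and>
    ((\<forall>x\<in>{1..<T}. dbal K (a x) + dbal K (a (T - x)) = 0) \<longrightarrow>
      (\<forall>\<mu>\<in>{0..<4 * int (K * T)}.
        (let \<mu>1 = \<mu> div 4; \<mu>2 = \<mu> mod 4;
             \<tau>1m = (inv4 - \<eta> + \<mu>1) mod int T;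
             \<tau>2p = (3 * inv4 + \<eta> + \<mu>1) mod int T
         in acorr (4 * (K * T)) u \<mu> =
            (if \<mu> = 0 then 4 * int K * int T
             else if \<mu>2 = 0 then 4 * acorr (K * T) s \<mu>1
             else if \<mu>2 = 1 \<and> \<tau>1m = 0 then 0
             else if \<mu>2 = 1 then 4 * dbal K (a (nat \<tau>1m))
             else if \<mu>2 = 2 then 0
             else if \<tau>2p = 0 then 0
             else -4 * dbal K (a (nat \<tau>2p))))))"
proof -
  interpret thm3 K T \<eta> inv4 inv2 a s s' u using assms by unfold_locales
  show ?thesis using part1 part2 by blast
qed

end
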